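(* Let $p$ be a prime, $n\ge 1$, and $a_1,\ldots,a_n\in\mathbb{Q}_p$ with $|a_1|>p$ and $|a_1|>|j a_j|$ for all $2\le j\le n$. Then $$\int_{|x|\le 1}\chi(a_1x+\dots+a_nx^n)\,dx=0.$$
   Context: $|\cdot|$ denotes the $p$-adic absolute value on $\mathbb{Q}_p$; for an integer $j$, $|j|$ means its $p$-adic absolute value. Every nonzero $x\in\mathbb{Q}_p$ has a unique standard expansion $x=\sum_{j=k}^\infty x_jp^j$ with $x_j\in\{0,\ldots,p-1\}$, $x_k\neq 0$, $|x|=p^{-k}$. The additive character $\chi:\mathbb{Q}_p\to\mathbb{C}$ is $\chi(x)=\exp\!\big(2\pi i\sum_{j=k}^{-1}x_jp^j\big)$ if $|x|>1$ and $\chi(x)=1$ if $|x|\le 1$. $dx$ is the Haar measure on $\mathbb{Q}_p$ normalized so that each ball $\{x:|x-x_0|\le p^r\}$ has measure $p^r$. *)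

theory Defs
  imports "HOL-Probability.Probability"
begin

text \<open>p-adic numbers represented by their standard digit expansion
  x = sum_j (x j) p^j : a digit function int => nat with all digits < p and
  only finitely many nonzero digits at negative positions.\<close>

type_synonym padic = "int \<Rightarrow> nat"

definition padic_num :: "nat \<Rightarrow> padic \<Rightarrow> bool" where
  "padic_num p x \<longleftrightarrow> (\<forall>j. x j < p) \<and> (\<exists>k. \<forall>j<k. x j = 0)"

definition padic_trunc :: "nat \<Rightarrow> padic \<Rightarrow> int \<Rightarrow> rat" where
  "padic_trunc p x N = (\<Sum>j\<in>{j. j < N \<and> x j \<noteq> 0}. of_nat (x j) * (of_nat p) powi j)"

text \<open>r lies in p^K Z_(p), i.e. the p-adic valuation of r is at least K.\<close>
definition padic_small :: "nat \<Rightarrow> int \<Rightarrow> rat \<Rightarrow> bool" where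
  "padic_small p K r \<longleftrightarrow>
     (\<exists>a b::int. b \<noteq> 0 \<and> \<not> int p dvd b \<and> r = of_int a / of_int b * (of_nat p) powi K)"

definition padic_lim :: "nat \<Rightarrow> (int \<Rightarrow> rat) \<Rightarrow> padic \<Rightarrow> bool" where
  "padic_lim p s z \<longleftrightarrow> padic_num p z \<and>
     (\<forall>K. \<exists>N0. \<forall>N\<ge>N0. padic_small p K (s N - padic_trunc p z N))"

definition padic_limit :: "nat \<Rightarrow> (int \<Rightarrow> rat) \<Rightarrow> padic" where
  "padic_limit p s = (THE z. padic_lim p s z)"

definition padic_of_int :: "nat \<Rightarrow> int \<Rightarrow> padic" where
  "padic_of_int p m = padic_limit p (\<lambda>_. of_int m)"

definition padic_mul :: "nat \<Rightarrow> padic \<Rightarrow> padic \<Rightarrow> padic" where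
  "padic_mul p x y = padic_limit p (\<lambda>N. padic_trunc p x N * padic_trunc p y N)"

definition padic_poly :: "nat \<Rightarrow> (nat \<Rightarrow> padic) \<Rightarrow> nat \<Rightarrow> padic \<Rightarrow> padic" where
  "padic_poly p a n x =
     padic_limit p (\<lambda>N. \<Sum>j=1..n. padic_trunc p (a j) N * padic_trunc p x N ^ j)"

definition padic_abs :: "nat \<Rightarrow> padic \<Rightarrow> real" where
  "padic_abs p x = (if x = (\<lambda>_. 0) then 0
      else real p powi (- (THE k. x k \<noteq> 0 \<and> (\<forall>j<k. x j = 0))))"

definition padic_chi :: "nat \<Rightarrow> padic \<Rightarrow> complex" where
  "padic_chi p x = (if padic_abs p x \<le> 1 then 1
      else exp (2 * pi * \<i> *
        of_real (\<Sum>j\<in>{j. j < 0 \<and> x j \<noteq> 0}. real (x j) * real p powi j)))"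

text \<open>Haar measure on the unit ball Z_p = {x. |x| <= 1}: digits at negative
  positions are 0, digits at positions j >= 0 are independent and uniform
  on {0..p-1}.  Every ball of radius p^r (r <= 0) has measure p^r.\<close>
definition padic_haar_Zp :: "nat \<Rightarrow> padic measure" where
  "padic_haar_Zp p = (\<Pi>\<^sub>M j\<in>(UNIV::int set).
      uniform_count_measure (if j < 0 then {0} else {0..<p}))"

end

theory Submission
  imports Defs
begin

definition ee :: "real \<Rightarrow> complex" where
  "ee r = exp (2 * pi * \<i> * complex_of_real r)"

lemma ee_add: "ee (a + b) = ee a * ee b"
  unfolding ee_def by (simp add: distrib_left exp_add)

lemma ee_int: "ee (of_int k) = 1"
  unfolding ee_def using exp_2pi_1_int[of k] by (simp add: mult.commute mult.left_commute)

lemma ee_shift: "ee (r + of_int k) = ee r"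
  by (simp add: ee_add ee_int)

lemma ee_one_imp: assumes "ee r = 1" shows "r \<in> \<int>"
proof -
  from assms obtain n :: int where "Im (2 * pi * \<i> * complex_of_real r) = real_of_int (2 * n) * pi"
    unfolding ee_def exp_eq_1 by blast
  hence "2 * pi * r = 2 * n * pi" by simp
  hence "r = of_int n" by simp
  thus ?thesis by simp
qed

lemma ee_pow: "ee (real k * r) = ee r ^ k"
proof -
  have "ee (real k * r) = exp (of_nat k * (2 * pi * \<i> * complex_of_real r))"
    unfolding ee_def by (simp add: algebra_simps)
  thus ?thesis by (simp add: exp_of_nat_mult ee_def)
qed

lemma ee_cong:
  fixes a b :: int
  assumes "int p ^ L dvd a - b" "p > 0"
  shows "ee (of_int a / real p ^ L) = ee (of_int b / real p ^ L)"
proof -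
  obtain k where k: "a - b = int p ^ L * k" using assms(1) by (auto elim: dvdE)
  have "of_int a / real p ^ L = of_int b / real p ^ L + of_int k"
  proof -
    have "real_of_int a = of_int b + real p ^ L * of_int k"
      using arg_cong[OF k, of real_of_int] by simp
    thus ?thesis using assms(2) by (simp add: field_simps)
  qed
  thus ?thesis by (simp add: ee_shift)
qed

lemma root_sum:
  fixes c :: int
  assumes p: "prime p" and c: "\<not> int p dvd c"
  shows "(\<Sum>y<p. ee (of_int c * real y / real p)) = 0"
proof -
  define z where "z = ee (of_int c / real p)"
  have p0: "p > 0" using p prime_gt_0_nat by blast
  have e: "ee (of_int c * real y / real p) = z ^ y" for y
    unfolding z_def using ee_pow[of y "of_int c / real p"] by (simp add: mult.commute)
  have zp: "z ^ p = 1"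
    using ee_pow[of p "of_int c / real p"] p0 ee_int[of c] unfolding z_def by simp
  have z1: "z \<noteq> 1"
  proof
    assume "z = 1"
    then have "of_int c / real p \<in> \<int>" unfolding z_def by (rule ee_one_imp)
    then obtain k :: int where k: "of_int c / real p = of_int k" using Ints_cases by metis
    have "real_of_int c = real p * of_int k"
    proof -
      have "real_of_int c = (of_int c / real p) * real p" using p0 by simp
      also have "\<dots> = real p * of_int k" using k by simp
      finally show ?thesis .
    qed
    hence "real_of_int c = real_of_int (int p * k)" by simp
    hence "c = int p * k" by (simp only: of_int_eq_iff)
    thus False using c by simp
  qed
  have "(\<Sum>y<p. ee (of_int c * real y / real p)) = (\<Sum>y<p. z ^ y)" by (intro sum.cong refl e)
  also have "\<dots> = 0" using z1 zp by (simp add: sum_gp_strict)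
  finally show ?thesis .
qed

lemma sum_shift_periodic:
  fixes F :: "int \<Rightarrow> 'a::comm_monoid_add" and M :: int
  assumes M: "M > 0" and per: "\<And>X. F (X mod M) = F X"
  shows "(\<Sum>X\<in>{0..<M}. F (X + h)) = (\<Sum>X\<in>{0..<M}. F X)"
proof -
  define g where "g X = (X + h) mod M" for X
  have inj: "inj_on g {0..<M}"
  proof
    fix X Y assume X: "X \<in> {0..<M}" and Y: "Y \<in> {0..<M}" and e: "g X = g Y"
    have "X mod M = Y mod M"
    proof -
      have "(X + h) mod M = (Y + h) mod M" using e by (simp add: g_def)
      hence "((X + h) - h) mod M = ((Y + h) - h) mod M" by (metis mod_diff_left_eq)
      thus ?thesis by simp
    qed
    thus "X = Y" using X Y by simp
  qed
  have img: "g ` {0..<M} = {0..<M}"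
  proof
    show "g ` {0..<M} \<subseteq> {0..<M}" using M by (auto simp: g_def)
    show "{0..<M} \<subseteq> g ` {0..<M}"
    proof
      fix Y assume Y: "Y \<in> {0..<M}"
      have "g ((Y - h) mod M) = Y"
        using Y unfolding g_def by (simp add: mod_add_left_eq)
      moreover have "(Y - h) mod M \<in> {0..<M}" using M by simp
      ultimately show "Y \<in> g ` {0..<M}" by (metis image_eqI)
    qed
  qed
  have "(\<Sum>X\<in>{0..<M}. F (X + h)) = (\<Sum>X\<in>{0..<M}. F (g X))"
    by (simp add: g_def per)
  also have "\<dots> = sum F (g ` {0..<M})" using inj by (simp add: sum.reindex)
  also have "\<dots> = (\<Sum>X\<in>{0..<M}. F X)" using img by simp
  finally show ?thesis .
qed

lemma binom_dvd:
  fixes a :: int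
  assumes p: "prime p" and m: "m \<ge> 2" and k: "1 \<le> k" "k \<le> j"
    and d: "int p ^ (w+1) dvd int j * a"
  shows "int p ^ (w+m) dvd a * int (j choose k) * (int p ^ (m-1)) ^ k"
proof -
  define g where "g = a * int (j choose k)"
  have "int k * int (j choose k) = int j * int ((j - 1) choose (k - 1))"
  proof -
    have "k * (j choose k) = j * ((j - 1) choose (k - 1))" using times_binomial_minus1_eq[of k j] k by simp
    hence "int (k * (j choose k)) = int (j * ((j - 1) choose (k - 1)))" by (rule arg_cong)
    thus ?thesis by (simp only: of_nat_mult)
  qed
  hence kg: "int k * g = (int j * a) * int ((j - 1) choose (k - 1))"
    unfolding g_def by (simp add: algebra_simps)
  have Pkg: "int p ^ (w+1) dvd int k * g" unfolding kg using d by simp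
  obtain t where t: "t \<le> w + 1" "gcd (p ^ (w+1)) k = p ^ t"
    using divides_primepow_nat[OF p, of "gcd (p ^ (w+1)) k" "w+1"] by auto
  have "p ^ t dvd k" using t(2) by (metis gcd_dvd2)
  hence "p ^ t \<le> k" using k by (simp add: dvd_imp_le)
  also have "k < 2 ^ k" by (rule less_exp)
  also have "2 ^ k \<le> p ^ k" using prime_ge_2_nat[OF p] by (simp add: power_mono)
  finally have "t < k" using prime_ge_2_nat[OF p] by (simp add: power_less_imp_less_exp)
  have gi: "gcd (int p ^ (w+1)) (int k) = int p ^ t"
    using t(2) gcd_int_int_eq[of "p ^ (w+1)" k] by simp
  obtain u v where uv: "u * int p ^ (w+1) + v * int k = int p ^ t"
    using bezout_int[of "int p ^ (w+1)" "int k"] gi by auto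
  have "int p ^ t * g = u * int p ^ (w+1) * g + v * (int k * g)"
    using uv by (metis distrib_right mult.assoc)
  hence "int p ^ (w+1) dvd int p ^ t * g" using Pkg by simp
  moreover have "int p ^ t dvd int p ^ (k - 1)" using \<open>t < k\<close> by (simp add: le_imp_power_dvd)
  ultimately have "int p ^ (w+1) dvd int p ^ (k - 1) * g" by (meson dvd_mult_left dvd_trans mult_dvd_mono dvd_refl)
  hence "int p ^ (w+1) * int p ^ ((m-1)*k - (k-1)) dvd int p ^ (k - 1) * g * int p ^ ((m-1)*k - (k-1))"
    by (simp add: mult_dvd_mono)
  moreover have "(k - 1) + ((m-1)*k - (k-1)) = (m-1)*k"
  proof -
    have "1 * k \<le> (m-1)*k" using m by (intro mult_le_mono1) simp
    hence "k \<le> (m-1)*k" by (simp only: mult_1)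
    thus ?thesis by linarith
  qed
  moreover have "w + m \<le> (w+1) + ((m-1)*k - (k-1))"
  proof -
    have "(m-1)*k = (m-2)*k + k"
    proof -
      have "m - 1 = Suc (m - 2)" using m by simp
      thus ?thesis by simp
    qed
    moreover have "m - 2 \<le> (m-2)*k" using k by simp
    ultimately show ?thesis using m k by linarith
  qed
  ultimately have "int p ^ (w+m) dvd g * int p ^ ((m-1)*k)"
  proof -
    assume a1: "int p ^ (w+1) * int p ^ ((m-1)*k - (k-1)) dvd int p ^ (k - 1) * g * int p ^ ((m-1)*k - (k-1))"
      and a2: "(k - 1) + ((m-1)*k - (k-1)) = (m-1)*k" and a3: "w + m \<le> (w+1) + ((m-1)*k - (k-1))"
    have "int p ^ (k - 1) * g * int p ^ ((m-1)*k - (k-1)) = g * int p ^ ((m-1)*k)"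
      using a2 by (metis mult.commute mult.left_commute power_add)
    moreover have "int p ^ (w+1) * int p ^ ((m-1)*k - (k-1)) = int p ^ ((w+1) + ((m-1)*k - (k-1)))"
      by (simp add: power_add)
    moreover have "int p ^ (w+m) dvd int p ^ ((w+1) + ((m-1)*k - (k-1)))"
      using a3 by (rule le_imp_power_dvd)
    ultimately show ?thesis using a1 by (metis dvd_trans)
  qed
  moreover have "int p ^ ((m-1)*k) = (int p ^ (m-1)) ^ k" by (simp only: power_mult)
  ultimately show ?thesis unfolding g_def by simp
qed


lemma term_cong:
  fixes a X y :: int
  assumes p: "prime p" and m: "m \<ge> 2" and j: "j \<ge> 1"
    and d: "j \<ge> 2 \<Longrightarrow> int p ^ (w+1) dvd int j * a"
  shows "int p ^ (w+m) dvd a * (X + int p ^ (m-1) * y) ^ j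
           - (a * X ^ j + int j * a * X ^ (j-1) * (int p ^ (m-1) * y))"
proof (cases "j = 1")
  case True thus ?thesis by (simp add: algebra_simps)
next
  case False
  hence j2: "j \<ge> 2" using j by simp
  define h where "h = int p ^ (m-1) * y"
  have bin: "(h + X) ^ j = (\<Sum>k\<le>j. of_nat (j choose k) * h ^ k * X ^ (j - k))"
    by (rule binomial_ring)
  have split: "{..j} = {0, 1} \<union> {2..j}" using j2 by auto
  have "(\<Sum>k\<le>j. of_nat (j choose k) * h ^ k * X ^ (j - k))
      = (\<Sum>k\<in>{0,1}. of_nat (j choose k) * h ^ k * X ^ (j - k))
        + (\<Sum>k\<in>{2..j}. of_nat (j choose k) * h ^ k * X ^ (j - k))"
    unfolding split by (rule sum.union_disjoint) auto
  also have "(\<Sum>k\<in>{0,1}. of_nat (j choose k) * h ^ k * X ^ (j - k)) = X ^ j + int j * h * X ^ (j - 1)"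
    by simp
  finally have e: "a * (X + h) ^ j - (a * X ^ j + int j * a * X ^ (j-1) * h)
      = (\<Sum>k\<in>{2..j}. a * (of_nat (j choose k) * h ^ k * X ^ (j - k)))"
    using bin by (simp add: algebra_simps sum_distrib_left)
  have "int p ^ (w+m) dvd (\<Sum>k\<in>{2..j}. a * (of_nat (j choose k) * h ^ k * X ^ (j - k)))"
  proof (rule dvd_sum)
    fix k assume k: "k \<in> {2..j}"
    have "int p ^ (w+m) dvd a * int (j choose k) * (int p ^ (m-1)) ^ k"
      using binom_dvd[OF p m, of k j w a] k d j2 by auto
    hence "int p ^ (w+m) dvd a * int (j choose k) * (int p ^ (m-1)) ^ k * (y ^ k * X ^ (j - k))"
      by (rule dvd_mult2)
    thus "int p ^ (w+m) dvd a * (of_nat (j choose k) * h ^ k * X ^ (j - k))"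
      unfolding h_def by (simp add: power_mult_distrib algebra_simps)
  qed
  thus ?thesis using e unfolding h_def by simp
qed

lemma expsum:
  fixes A :: "nat \<Rightarrow> int" and p :: nat and u :: int
  assumes p: "prime p" and m: "m \<ge> 2" and N: "N \<ge> w + m"
    and A1: "A 1 = int p ^ w * u" and u: "\<not> int p dvd u"
    and Aj: "\<And>j. j \<in> {2..n} \<Longrightarrow> int p ^ (w+1) dvd int j * A j" and n: "n \<ge> 1"
  shows "(\<Sum>X\<in>{0..<int p ^ N}. ee (of_int (\<Sum>j=1..n. A j * X ^ j) / real p ^ (w+m))) = 0"
proof -
  define L where "L = w + m"
  define P where "P X = (\<Sum>j=1..n. A j * X ^ j)" for X :: int
  define F where "F X = ee (of_int (P X) / real p ^ L)" for X
  define D where "D X = (\<Sum>j=1..n. int j * A j * X ^ (j-1))" for X :: int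
  define h where "h y = int p ^ (m-1) * int y" for y :: nat
  have p0: "p > 0" using p prime_gt_0_nat by blast
  have split: "{1..n} = insert 1 {2..n}" using n by auto
  have Dform: "\<exists>c. D X = int p ^ w * c \<and> \<not> int p dvd c" for X
  proof -
    have "int p ^ (w+1) dvd (\<Sum>j\<in>{2..n}. int j * A j * X ^ (j-1))"
    proof (intro dvd_sum)
      fix j assume "j \<in> {2..n}"
      thus "int p ^ (w+1) dvd int j * A j * X ^ (j-1)" by (intro dvd_mult2 Aj)
    qed
    then obtain r where r: "(\<Sum>j\<in>{2..n}. int j * A j * X ^ (j-1)) = int p ^ (w+1) * r"
      by (auto elim: dvdE)
    have "D X = A 1 + (\<Sum>j\<in>{2..n}. int j * A j * X ^ (j-1))"
      unfolding D_def split by (subst sum.insert) auto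
    also have "\<dots> = int p ^ w * (u + int p * r)" using A1 r by (simp add: algebra_simps)
    finally have "D X = int p ^ w * (u + int p * r)" .
    moreover have "\<not> int p dvd (u + int p * r)" using u by (simp add: dvd_add_left_iff)
    ultimately show ?thesis by blast
  qed
  have Pcong: "int p ^ L dvd P (X + h y) - (P X + D X * h y)" for X y
  proof -
    have "P (X + h y) - (P X + D X * h y) =
       (\<Sum>j=1..n. A j * (X + int p ^ (m-1) * int y) ^ j
           - (A j * X ^ j + int j * A j * X ^ (j-1) * (int p ^ (m-1) * int y)))"
      unfolding P_def D_def h_def by (simp add: sum_subtractf sum.distrib sum_distrib_right)
    also have "int p ^ L dvd \<dots>"
      unfolding L_def
    proof (intro dvd_sum term_cong[OF p m])
      fix j assume "j \<in> {1..n}" "2 \<le> j"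
      thus "int p ^ (w+1) dvd int j * A j" by (intro Aj) auto
    qed auto
    finally show ?thesis .
  qed
  have shiftF: "F (X + h y) = F X * ee (of_int c * real y / real p)"
    if c: "D X = int p ^ w * c" for X y c
  proof -
    have "F (X + h y) = ee (of_int (P X + D X * h y) / real p ^ L)"
      unfolding F_def using ee_cong[OF Pcong p0] by simp
    also have "of_int (P X + D X * h y) / real p ^ L
        = of_int (P X) / real p ^ L + of_int c * real y / real p"
    proof -
      define q where "q = real p"
      have q0: "q \<noteq> 0" using p0 unfolding q_def by simp
      have mm: "w + m = w + (m-1) + 1" using m by simp
      have "q ^ L = q ^ (w + (m-1) + 1)" unfolding L_def mm ..
      also have "\<dots> = q ^ w * q ^ (m-1) * q" by (simp only: power_add power_one_right)
      finally have e2: "q ^ L = q ^ w * q ^ (m-1) * q" .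
      have e1: "real_of_int (D X * h y) = q ^ w * q ^ (m-1) * (of_int c * real y)"
        using c unfolding h_def q_def by simp
      have "real_of_int (D X * h y) / q ^ L = (q ^ w * q ^ (m-1) * (of_int c * real y)) / (q ^ w * q ^ (m-1) * q)"
        using e1 e2 by simp
      also have "\<dots> = (of_int c * real y) / q" using q0 by (simp del: of_nat_power)
      finally have "real_of_int (D X * h y) / q ^ L = (of_int c * real y) / q" .
      thus ?thesis unfolding q_def by (simp add: add_divide_distrib)
    qed
    finally show ?thesis unfolding F_def by (simp add: ee_add)
  qed
  define M where "M = int p ^ N"
  have per: "F (X mod M) = F X" for X
  proof -
    have tm: "A j * (X mod M) ^ j mod M = A j * X ^ j mod M" for j
    proof -
      have "A j * (X mod M)^j mod M = A j * ((X mod M)^j mod M) mod M" by (simp only: mod_mult_right_eq)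
      also have "\<dots> = A j * (X^j mod M) mod M" by (simp only: power_mod)
      also have "\<dots> = A j * X^j mod M" by (simp only: mod_mult_right_eq)
      finally show ?thesis .
    qed
    have "P (X mod M) mod M = (\<Sum>j=1..n. A j * (X mod M) ^ j mod M) mod M"
      unfolding P_def by (simp only: mod_sum_eq)
    also have "\<dots> = (\<Sum>j=1..n. A j * X ^ j mod M) mod M" by (simp only: tm)
    also have "\<dots> = P X mod M" unfolding P_def by (simp only: mod_sum_eq)
    finally have "P (X mod M) mod M = P X mod M" .
    hence "M dvd P (X mod M) - P X" by (simp add: mod_eq_dvd_iff)
    moreover have "int p ^ L dvd M" using N unfolding L_def M_def by (simp add: le_imp_power_dvd)
    ultimately have "int p ^ L dvd P (X mod M) - P X" by (rule dvd_trans[rotated])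
    thus ?thesis unfolding F_def using ee_cong p0 by blast
  qed
  define S where "S = (\<Sum>X\<in>{0..<M}. F X)"
  have Mpos: "M > 0" using p0 unfolding M_def by simp
  have "real p *\<^sub>R S = (\<Sum>y<p. \<Sum>X\<in>{0..<M}. F (X + h y))"
    unfolding S_def using sum_shift_periodic[of M F, OF Mpos per] by (simp add: scaleR_conv_of_real)
  also have "\<dots> = (\<Sum>X\<in>{0..<M}. \<Sum>y<p. F (X + h y))" by (rule sum.swap)
  also have "\<dots> = 0"
  proof (rule sum.neutral, rule ballI)
    fix X assume "X \<in> {0..<M}"
    obtain c where c: "D X = int p ^ w * c" "\<not> int p dvd c" using Dform by blast
    have "(\<Sum>y<p. F (X + h y)) = F X * (\<Sum>y<p. ee (of_int c * real y / real p))"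
      by (simp add: shiftF[OF c(1)] sum_distrib_left)
    also have "\<dots> = 0" using root_sum[OF p c(2)] by simp
    finally show "(\<Sum>y<p. F (X + h y)) = 0" .
  qed
  finally have "S = 0" using p0 by simp
  thus ?thesis unfolding S_def F_def P_def L_def M_def .
qed


definition V :: "nat \<Rightarrow> padic \<Rightarrow> nat \<Rightarrow> nat \<Rightarrow> int" where
  "V p x L n = (\<Sum>t<n. int (x (int t - int L)) * int p ^ t)"

definition mkz :: "nat \<Rightarrow> (nat \<Rightarrow> int) \<Rightarrow> nat \<Rightarrow> padic" where
  "mkz p S L j = (if j < - int L then 0
      else nat ((S (nat (j + int L) + 1) div int p ^ nat (j + int L)) mod int p))"

lemma dvd_diff_mult:
  fixes a a' b b' M :: int
  assumes "M dvd a' - a" "M dvd b' - b"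
  shows "M dvd a' * b' - a * b"
proof -
  have "a' * b' - a * b = a' * (b' - b) + (a' - a) * b" by (simp add: algebra_simps)
  thus ?thesis using assms by simp
qed

lemma dvd_diff_pow:
  fixes a a' M :: int
  assumes "M dvd a' - a"
  shows "M dvd a' ^ j - a ^ j"
proof (induction j)
  case 0 thus ?case by simp
next
  case (Suc j) thus ?case using dvd_diff_mult[OF assms Suc] by (simp add: mult.commute)
qed

lemma dvd_diff_sum:
  fixes f f' :: "'b \<Rightarrow> int"
  assumes "\<And>j. j \<in> A \<Longrightarrow> M dvd f' j - f j"
  shows "M dvd sum f' A - sum f A"
  using assms by (simp add: sum_subtractf[symmetric] dvd_sum)

lemma digits_sum:
  fixes S :: "nat \<Rightarrow> int" and q :: int
  assumes q: "q > 0" and cong: "\<And>i i'. i \<le> i' \<Longrightarrow> q ^ i dvd S i' - S i"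
  shows "(\<Sum>t<n. ((S (t+1) div q ^ t) mod q) * q ^ t) = S n mod q ^ n"
proof (induction n)
  case 0 thus ?case by simp
next
  case (Suc n)
  have "S (Suc n) mod q ^ n = S n mod q ^ n"
    using cong[of n "Suc n"] by (simp add: mod_eq_dvd_iff)
  moreover have "S (Suc n) mod (q ^ n * q) = q ^ n * (S (Suc n) div q ^ n mod q) + S (Suc n) mod q ^ n"
    using q by (intro zmod_zmult2_eq) simp
  ultimately show ?case using Suc by (simp add: algebra_simps)
qed

lemma V_cong:
  assumes "n \<le> n'"
  shows "int p ^ n dvd V p x L n' - V p x L n"
proof -
  define f where "f t = int (x (int t - int L)) * int p ^ t" for t
  have sp: "{..<n'} = {..<n} \<union> {n..<n'}" using assms by auto
  have "V p x L n' = sum f ({..<n} \<union> {n..<n'})" unfolding V_def f_def sp ..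
  also have "\<dots> = sum f {..<n} + sum f {n..<n'}" by (rule sum.union_disjoint) auto
  finally have e: "V p x L n' = V p x L n + sum f {n..<n'}" unfolding V_def f_def .
  have "int p ^ n dvd sum f {n..<n'}"
  proof (rule dvd_sum)
    fix t assume "t \<in> {n..<n'}"
    hence "n \<le> t" by simp
    thus "int p ^ n dvd f t" unfolding f_def by (rule dvd_mult[OF le_imp_power_dvd])
  qed
  thus ?thesis using e by simp
qed

lemma sum_lead:
  fixes e :: "nat \<Rightarrow> int" and q :: int
  assumes "\<And>t. t < i0 \<Longrightarrow> e t = 0" "i0 < n"
  shows "\<exists>r. (\<Sum>t<n. e t * q ^ t) = q ^ i0 * (e i0 + q * r)"
proof -
  have split: "{..<n} = {..<i0} \<union> ({i0} \<union> {Suc i0..<n})" using assms(2) by auto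
  have "(\<Sum>t<n. e t * q ^ t) = (\<Sum>t<i0. e t * q ^ t) + (e i0 * q ^ i0 + (\<Sum>t\<in>{Suc i0..<n}. e t * q ^ t))"
    unfolding split by (subst sum.union_disjoint, auto)+
  also have "(\<Sum>t<i0. e t * q ^ t) = 0" using assms(1) by simp
  finally have e1: "(\<Sum>t<n. e t * q ^ t) = e i0 * q ^ i0 + (\<Sum>t\<in>{Suc i0..<n}. e t * q ^ t)" by simp
  have "q ^ Suc i0 dvd (\<Sum>t\<in>{Suc i0..<n}. e t * q ^ t)"
  proof (rule dvd_sum)
    fix t assume "t \<in> {Suc i0..<n}"
    hence "Suc i0 \<le> t" by simp
    thus "q ^ Suc i0 dvd e t * q ^ t" by (rule dvd_mult[OF le_imp_power_dvd])
  qed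
  then obtain r where "(\<Sum>t\<in>{Suc i0..<n}. e t * q ^ t) = q ^ Suc i0 * r" by (auto elim: dvdE)
  with e1 have "(\<Sum>t<n. e t * q ^ t) = q ^ i0 * (e i0 + q * r)" by (simp add: algebra_simps)
  thus ?thesis by blast
qed

lemma trunc_V_gen:
  assumes p: "p > 0" and z: "\<And>j. j < - int L \<Longrightarrow> x j = 0" and N: "N \<ge> - int L"
  shows "(\<Sum>j\<in>{j. j < N \<and> x j \<noteq> 0}. of_nat (x j) * (of_nat p :: 'a::field_char_0) powi j)
         = of_int (V p x L (nat (N + int L))) / of_nat p ^ L"
proof -
  define K where "K = nat (N + int L)"
  have p0: "(of_nat p :: 'a) \<noteq> 0" using p by simp
  have "(\<Sum>j\<in>{j. j < N \<and> x j \<noteq> 0}. of_nat (x j) * (of_nat p :: 'a) powi j)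
      = (\<Sum>j\<in>{- int L..<N}. of_nat (x j) * (of_nat p :: 'a) powi j)"
  proof (rule sum.mono_neutral_left)
    show "finite {- int L..<N}" by simp
    show "{j. j < N \<and> x j \<noteq> 0} \<subseteq> {- int L..<N}"
      using z by (auto simp: not_less[symmetric])
    show "\<forall>j\<in>{- int L..<N} - {j. j < N \<and> x j \<noteq> 0}. of_nat (x j) * (of_nat p :: 'a) powi j = 0"
      by auto
  qed
  also have "{- int L..<N} = (\<lambda>t. int t - int L) ` {..<K}"
  proof
    show "(\<lambda>t. int t - int L) ` {..<K} \<subseteq> {- int L..<N}" unfolding K_def by auto
    show "{- int L..<N} \<subseteq> (\<lambda>t. int t - int L) ` {..<K}"
    proof
      fix j assume j: "j \<in> {- int L..<N}"
      hence "j = int (nat (j + int L)) - int L" "nat (j + int L) \<in> {..<K}" unfolding K_def by auto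
      thus "j \<in> (\<lambda>t. int t - int L) ` {..<K}" by blast
    qed
  qed
  also have "(\<Sum>j\<in>(\<lambda>t. int t - int L) ` {..<K}. of_nat (x j) * (of_nat p :: 'a) powi j)
      = (\<Sum>t<K. of_nat (x (int t - int L)) * (of_nat p :: 'a) powi (int t - int L))"
    by (subst sum.reindex) (auto simp: inj_on_def)
  also have "\<dots> = (\<Sum>t<K. of_nat (x (int t - int L)) * (of_nat p :: 'a) ^ t / of_nat p ^ L)"
  proof (intro sum.cong refl)
    fix t
    have "(of_nat p :: 'a) powi (int t - int L) = of_nat p powi (int t) / of_nat p powi (int L)"
      using p0 by (rule power_int_diff[OF disjI1])
    also have "\<dots> = of_nat p ^ t / of_nat p ^ L" by (simp only: power_int_of_nat)
    finally show "of_nat (x (int t - int L)) * (of_nat p :: 'a) powi (int t - int L)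
       = of_nat (x (int t - int L)) * (of_nat p :: 'a) ^ t / of_nat p ^ L" by simp
  qed
  also have "\<dots> = (\<Sum>t<K. of_nat (x (int t - int L)) * (of_nat p :: 'a) ^ t) / of_nat p ^ L"
    by (simp add: sum_divide_distrib)
  also have "\<dots> = of_int (V p x L K) / of_nat p ^ L"
    unfolding V_def by simp
  finally show ?thesis unfolding K_def .
qed

lemma trunc_V:
  assumes p: "p > 0" and z: "\<And>j. j < - int L \<Longrightarrow> x j = 0" and N: "N \<ge> - int L"
  shows "padic_trunc p x N = of_int (V p x L (nat (N + int L))) / of_nat p ^ L"
  unfolding padic_trunc_def by (rule trunc_V_gen[OF assms])

lemma mkz_low: "j < - int L \<Longrightarrow> mkz p S L j = 0"
  unfolding mkz_def by simp

lemma mkz_num: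
  assumes "p > 0"
  shows "padic_num p (mkz p S L)"
  unfolding padic_num_def
proof
  show "\<forall>j. mkz p S L j < p"
  proof
    fix j
    have "(S (nat (j + int L) + 1) div int p ^ nat (j + int L)) mod int p < int p" using assms by simp
    thus "mkz p S L j < p" unfolding mkz_def using assms by (auto simp: nat_less_iff)
  qed
  show "\<exists>k. \<forall>j<k. mkz p S L j = 0" using mkz_low by blast
qed

lemma V_mkz:
  assumes p: "p > 0" and cong: "\<And>i i'. i \<le> i' \<Longrightarrow> int p ^ i dvd S i' - S i"
  shows "V p (mkz p S L) L n = S n mod int p ^ n"
proof -
  have "V p (mkz p S L) L n = (\<Sum>t<n. ((S (t+1) div int p ^ t) mod int p) * int p ^ t)"
    unfolding V_def
  proof (intro sum.cong refl)
    fix t assume "t \<in> {..<n}"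
    have "nat (int t - int L + int L) = t" by simp
    moreover have "0 \<le> (S (t+1) div int p ^ t) mod int p" using p by simp
    ultimately show "int (mkz p S L (int t - int L)) * int p ^ t = ((S (t+1) div int p ^ t) mod int p) * int p ^ t"
      unfolding mkz_def by simp
  qed
  also have "\<dots> = S n mod int p ^ n" using p by (intro digits_sum cong) auto
  finally show ?thesis .
qed


lemma small_diff:
  assumes p: "prime p" and r: "padic_small p K r" and r': "padic_small p K r'"
  shows "padic_small p K (r - r')"
proof -
  have pi: "prime (int p)" using p by (simp add: prime_nat_int_transfer)
  obtain a b where ab: "b \<noteq> 0" "\<not> int p dvd b" "r = of_int a / of_int b * of_nat p powi K"
    using r unfolding padic_small_def by blast
  obtain a' b' where ab': "b' \<noteq> 0" "\<not> int p dvd b'" "r' = of_int a' / of_int b' * of_nat p powi K"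
    using r' unfolding padic_small_def by blast
  have "b * b' \<noteq> 0" using ab ab' by simp
  moreover have "\<not> int p dvd b * b'" using ab ab' pi by (simp add: prime_dvd_mult_iff)
  moreover have "r - r' = of_int (a * b' - a' * b) / of_int (b * b') * of_nat p powi K"
    using ab(1) ab'(1) unfolding ab(3) ab'(3) by (simp add: field_simps)
  ultimately show ?thesis unfolding padic_small_def by blast
qed

lemma small_int:
  assumes pp: "prime p" and KN: "K \<le> N"
  shows "padic_small p K (of_int c * of_nat p powi N)"
proof -
  have p: "p > 0" using pp prime_gt_0_nat by blast
  have p0: "(of_nat p :: rat) \<noteq> 0" using p by simp
  have "(of_nat p :: rat) powi N = of_nat p powi (N - K) * of_nat p powi K"
    using p0 power_int_add[of "of_nat p :: rat" "N - K" K] by simp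
  also have "(of_nat p :: rat) powi (N - K) = of_nat p ^ nat (N - K)"
    using KN power_int_of_nat[of "of_nat p :: rat" "nat (N - K)"] by simp
  finally have "of_int c * (of_nat p :: rat) powi N = of_int (c * int p ^ nat (N - K)) / of_int 1 * of_nat p powi K"
    by simp
  moreover have "\<not> int p dvd 1" using prime_ge_2_nat[OF pp] by (simp add: zdvd1_eq)
  ultimately show ?thesis unfolding padic_small_def by (intro exI[of _ "c * int p ^ nat (N - K)"] exI[of _ 1]) auto
qed

lemma lim_mkz:
  assumes p: "prime p" and cong: "\<And>i i'. i \<le> i' \<Longrightarrow> int p ^ i dvd S i' - S i"
    and sdef: "\<And>N. N \<ge> 0 \<Longrightarrow> s N = of_int (S (nat N)) / of_nat p ^ L"
  shows "padic_lim p s (mkz p S L)"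
  unfolding padic_lim_def
proof (intro conjI allI)
  have p0: "p > 0" using p prime_gt_0_nat by blast
  have p1: "\<not> int p dvd 1" using prime_ge_2_nat[OF p] by (simp add: zdvd1_eq)
  show "padic_num p (mkz p S L)" using p0 by (rule mkz_num)
  fix K :: int
  show "\<exists>N0. \<forall>N\<ge>N0. padic_small p K (s N - padic_trunc p (mkz p S L) N)"
  proof (intro exI allI impI)
    fix N assume N: "max 0 (K + int L) \<le> N"
    define n where "n = nat N"
    have Nn: "N = int n" using N unfolding n_def by simp
    have tz: "padic_trunc p (mkz p S L) N = of_int (S (n + L) mod int p ^ (n + L)) / of_nat p ^ L"
    proof -
      have "padic_trunc p (mkz p S L) N = of_int (V p (mkz p S L) L (nat (N + int L))) / of_nat p ^ L"
        using p0 mkz_low N by (intro trunc_V) auto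
      also have "nat (N + int L) = n + L" using Nn by simp
      finally show ?thesis using V_mkz[OF p0 cong] by simp
    qed
    have "int p ^ n dvd S n - S (n + L) mod int p ^ (n + L)"
    proof -
      define M where "M = int p ^ (n + L)"
      have "S n - S (n + L) mod M = S (n + L) div M * M - (S (n + L) - S n)"
        using minus_div_mult_eq_mod[of "S (n + L)" M] by linarith
      moreover have "int p ^ n dvd S (n + L) - S n" by (rule cong) simp
      moreover have "int p ^ n dvd M" unfolding M_def by (simp add: le_imp_power_dvd)
      hence "int p ^ n dvd S (n + L) div M * M" by (rule dvd_mult)
      ultimately show ?thesis unfolding M_def by (metis dvd_diff)
    qed
    then obtain c where c: "S n - S (n + L) mod int p ^ (n + L) = int p ^ n * c" by (auto elim: dvdE)
    have "s N - padic_trunc p (mkz p S L) N = of_int (S n - S (n + L) mod int p ^ (n + L)) / of_nat p ^ L"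
      using sdef[of N] N tz unfolding n_def by (simp add: diff_divide_distrib)
    also have "\<dots> = of_int (int p ^ n * c) / of_nat p ^ L" by (simp only: c)
    also have "\<dots> = of_int c * of_nat p powi (int n - int L)"
      using p0 by (simp add: power_int_diff power_int_of_nat)
    finally show "padic_small p K (s N - padic_trunc p (mkz p S L) N)"
      using small_int[OF p, of K "int n - int L" c] N Nn by simp
  qed
qed

lemma lim_unique:
  assumes p: "prime p" and hz: "padic_lim p s z" and hw: "padic_lim p s w"
  shows "z = w"
proof (rule ccontr)
  assume neq: "z \<noteq> w"
  have p0: "p > 0" using p prime_gt_0_nat by blast
  have pi: "prime (int p)" using p by (simp add: prime_nat_int_transfer)
  obtain kz where kz: "\<forall>j<kz. z j = 0" and zd: "\<forall>j. z j < p" using hz unfolding padic_lim_def padic_num_def by blast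
  obtain kw where kw: "\<forall>j<kw. w j = 0" and wd: "\<forall>j. w j < p" using hw unfolding padic_lim_def padic_num_def by blast
  define L where "L = nat (max (- kz) (- kw))"
  have Lz: "- int L \<le> kz" "- int L \<le> kw" unfolding L_def by auto
  have zL: "z j = 0" and wL: "w j = 0" if "j < - int L" for j using that kz kw Lz by auto
  define e where "e t = int (z (int t - int L)) - int (w (int t - int L))" for t
  obtain j where j: "z j \<noteq> w j" using neq by blast
  have "j \<ge> - int L"
  proof (rule ccontr)
    assume "\<not> j \<ge> - int L"
    hence "j < - int L" by simp
    thus False using j zL wL by simp
  qed
  hence "e (nat (j + int L)) \<noteq> 0" using j unfolding e_def by simp
  define i0 where "i0 = (LEAST t. e t \<noteq> 0)"
  have ei0: "e i0 \<noteq> 0" unfolding i0_def by (rule LeastI) fact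
  have below: "e t = 0" if "t < i0" for t using not_less_Least[of t "\<lambda>t. e t \<noteq> 0"] that unfolding i0_def by blast
  have ebound: "\<bar>e i0\<bar> < int p"
  proof -
    have "int (z (int i0 - int L)) < int p" "int (w (int i0 - int L)) < int p" using zd wd by auto
    thus ?thesis unfolding e_def abs_less_iff by linarith
  qed
  define K where "K = int i0 - int L + 1"
  obtain N1 where N1: "\<forall>N\<ge>N1. padic_small p K (s N - padic_trunc p z N)" using hz unfolding padic_lim_def by blast
  obtain N2 where N2: "\<forall>N\<ge>N2. padic_small p K (s N - padic_trunc p w N)" using hw unfolding padic_lim_def by blast
  define N where "N = max (max N1 N2) (int i0 + 1)"
  define n where "n = nat (N + int L)"
  have ni0: "i0 < n" unfolding n_def N_def by simp
  have "padic_small p K ((s N - padic_trunc p w N) - (s N - padic_trunc p z N))"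
  proof -
    have h1: "padic_small p K (s N - padic_trunc p w N)" using N2 unfolding N_def by simp
    have h2: "padic_small p K (s N - padic_trunc p z N)" using N1 unfolding N_def by simp
    show ?thesis by (rule small_diff[OF p h1 h2])
  qed
  hence sm: "padic_small p K (padic_trunc p z N - padic_trunc p w N)" by simp
  have NL: "N \<ge> - int L" unfolding N_def by simp
  have "padic_trunc p z N - padic_trunc p w N = of_int (V p z L n - V p w L n) / of_nat p ^ L"
    using trunc_V[OF p0 zL NL] trunc_V[OF p0 wL NL] unfolding n_def by (simp add: diff_divide_distrib)
  also have "V p z L n - V p w L n = (\<Sum>t<n. e t * int p ^ t)"
    unfolding V_def e_def by (simp add: sum_subtractf left_diff_distrib)
  also obtain r where "(\<Sum>t<n. e t * int p ^ t) = int p ^ i0 * (e i0 + int p * r)"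
    using sum_lead[of i0 e n "int p"] below ni0 by blast
  finally have tdiff: "padic_trunc p z N - padic_trunc p w N = of_int (int p ^ i0 * (e i0 + int p * r)) / of_nat p ^ L" .
  obtain a b where ab: "b \<noteq> 0" "\<not> int p dvd b"
    "of_int (int p ^ i0 * (e i0 + int p * r)) / of_nat p ^ L = of_int a / of_int b * (of_nat p :: rat) powi K"
    using sm unfolding tdiff padic_small_def by blast
  have pK: "(of_nat p :: rat) powi K * of_nat p ^ L = of_nat p ^ (i0 + 1)"
  proof -
    have "(of_nat p :: rat) powi K * of_nat p ^ L = of_nat p powi K * of_nat p powi (int L)"
      by (simp add: power_int_of_nat)
    also have "\<dots> = of_nat p powi (K + int L)" using p0 by (simp add: power_int_add)
    also have "K + int L = int (i0 + 1)" unfolding K_def by simp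
    finally show ?thesis by (simp only: power_int_of_nat)
  qed
  have "(of_int (int p ^ i0 * (e i0 + int p * r) * b) :: rat) = of_int a * (of_nat p powi K * of_nat p ^ L)"
    using ab(1,3) p0 by (simp add: field_simps)
  also have "\<dots> = of_int (a * int p ^ (i0 + 1))" using pK by simp
  finally have "int p ^ i0 * (e i0 + int p * r) * b = a * int p ^ (i0 + 1)" by (simp only: of_int_eq_iff)
  hence "int p ^ i0 * ((e i0 + int p * r) * b) = int p ^ i0 * (int p * a)" by (simp add: algebra_simps)
  hence eq: "(e i0 + int p * r) * b = int p * a" using p0 by simp
  have "e i0 * b = (e i0 + int p * r) * b - int p * (r * b)" by (simp add: algebra_simps)
  also have "\<dots> = int p * a - int p * (r * b)" using eq by simp
  also have "\<dots> = int p * (a - r * b)" by (simp add: algebra_simps)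
  finally have "int p dvd e i0 * b" by simp
  hence "int p dvd e i0" using ab(2) pi by (simp add: prime_dvd_mult_iff)
  hence "int p \<le> \<bar>e i0\<bar>" using dvd_imp_le_int[of "e i0" "int p"] ei0 by simp
  thus False using ebound by simp
qed

lemma limit_mkz:
  assumes p: "prime p" and cong: "\<And>i i'. i \<le> i' \<Longrightarrow> int p ^ i dvd S i' - S i"
    and sdef: "\<And>N. N \<ge> 0 \<Longrightarrow> s N = of_int (S (nat N)) / of_nat p ^ L"
  shows "padic_limit p s = mkz p S L"
  unfolding padic_limit_def
  using lim_mkz[OF assms] lim_unique[OF p] by blast


lemma lead_ex:
  assumes "padic_num p x" "x \<noteq> (\<lambda>_. 0)"
  shows "\<exists>k. x k \<noteq> 0 \<and> (\<forall>j<k. x j = 0)"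
proof -
  obtain b where b: "\<forall>j<b. x j = 0" using assms(1) unfolding padic_num_def by blast
  obtain j0 where j0: "x j0 \<noteq> 0" using assms(2) by auto
  have "j0 \<ge> b" using b j0 by (meson not_less)
  define f where "f t = x (b + int t)" for t
  have "f (nat (j0 - b)) \<noteq> 0" using j0 \<open>j0 \<ge> b\<close> unfolding f_def by simp
  define t0 where "t0 = (LEAST t. f t \<noteq> 0)"
  have ft0: "f t0 \<noteq> 0" unfolding t0_def by (rule LeastI) fact
  have below: "f t = 0" if "t < t0" for t using not_less_Least[of t "\<lambda>t. f t \<noteq> 0"] that unfolding t0_def by blast
  have "x (b + int t0) \<noteq> 0" using ft0 unfolding f_def .
  moreover have "\<forall>j<b + int t0. x j = 0"
  proof (intro allI impI)
    fix j assume j: "j < b + int t0"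
    show "x j = 0"
    proof (cases "j < b")
      case True thus ?thesis using b by simp
    next
      case False
      hence "j = b + int (nat (j - b))" "nat (j - b) < t0" using j by auto
      thus ?thesis using below[of "nat (j - b)"] unfolding f_def by metis
    qed
  qed
  ultimately show ?thesis by blast
qed

lemma lead_uniq:
  fixes k k' :: int and x :: padic
  assumes "x k \<noteq> 0" "\<forall>j<k. x j = 0" "x k' \<noteq> 0" "\<forall>j<k'. x j = (0::nat)"
  shows "k = k'"
  using assms by (metis linorder_neqE)

lemma abs_eq:
  fixes k :: int
  assumes "x k \<noteq> 0" "\<forall>j<k. x j = 0"
  shows "padic_abs p x = real p powi (- k)"
proof -
  have "x \<noteq> (\<lambda>_. 0)" using assms(1) by auto
  moreover have "(THE k. x k \<noteq> 0 \<and> (\<forall>j<k. x j = 0)) = k"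
    using assms lead_uniq[of x k] by (intro the_equality) blast+
  ultimately show ?thesis unfolding padic_abs_def by simp
qed

lemma abs_le1_digits:
  assumes p: "prime p" and x: "padic_num p x" and a: "padic_abs p x \<le> 1" and j: "j < 0"
  shows "x j = 0"
proof (cases "x = (\<lambda>_. 0)")
  case True thus ?thesis by simp
next
  case False
  then obtain k where k: "x k \<noteq> 0" "\<forall>j<k. x j = 0" using lead_ex[OF x] by blast
  have "k \<ge> 0"
  proof (rule ccontr)
    assume "\<not> k \<ge> 0"
    hence "(0::int) < - k" by simp
    moreover have "1 < real p" using prime_ge_2_nat[OF p] by simp
    ultimately have "real p powi 0 < real p powi (- k)" by (rule power_int_strict_increasing)
    thus False using a abs_eq[OF k, of p] by simp
  qed
  thus ?thesis using k j by simp
qed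

lemma chi_V:
  assumes p: "prime p" and z: "padic_num p z" and low: "\<And>j. j < - int L \<Longrightarrow> z j = 0"
  shows "padic_chi p z = ee (of_int (V p z L L) / real p ^ L)"
proof (cases "padic_abs p z \<le> 1")
  case True
  have "V p z L L = 0" unfolding V_def
    using abs_le1_digits[OF p z True] by (intro sum.neutral) auto
  thus ?thesis using True unfolding padic_chi_def by (simp add: ee_def)
next
  case False
  have p0: "p > 0" using p prime_gt_0_nat by blast
  have "(\<Sum>j\<in>{j. j < 0 \<and> z j \<noteq> 0}. real (z j) * real p powi j)
      = of_int (V p z L (nat (0 + int L))) / of_nat p ^ L"
    by (rule trunc_V_gen[OF p0 low]) simp_all
  thus ?thesis using False unfolding padic_chi_def ee_def by simp
qed


lemma val_bound:
  fixes f :: "nat \<Rightarrow> int" and q :: int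
  assumes "\<And>i. i < L \<Longrightarrow> 0 \<le> f i \<and> f i < q"
  shows "(\<Sum>i<L. f i * q ^ i) < q ^ L"
  using assms
proof (induction L)
  case 0 thus ?case by simp
next
  case (Suc L)
  have IH: "(\<Sum>i<L. f i * q ^ i) < q ^ L" using Suc by simp
  have fL: "0 \<le> f L" "f L \<le> q - 1" using Suc.prems[of L] by auto
  have q0: "q > 0" using Suc.prems[of L] by auto
  have "f L * q ^ L \<le> (q - 1) * q ^ L" using fL q0 by (intro mult_right_mono) auto
  hence "(\<Sum>i<Suc L. f i * q ^ i) < q ^ L + (q - 1) * q ^ L" using IH by simp
  also have "\<dots> = q ^ Suc L" by (simp add: algebra_simps)
  finally show ?case .
qed

lemma val_bij:
  assumes p: "p > 0"
  shows "bij_betw (\<lambda>t. \<Sum>i<L. int (t i) * int p ^ i) (PiE {..<L} (\<lambda>_. {0..<p})) {0..<int p ^ L}"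
proof -
  define T where "T = PiE {..<L} (\<lambda>_. {0..<p::nat})"
  define val where "val t = (\<Sum>i<L. int (t i) * int p ^ i)" for t :: "nat \<Rightarrow> nat"
  have fin: "finite T" unfolding T_def by (simp add: finite_PiE)
  have img: "val ` T = {0..<int p ^ L}"
  proof
    show "val ` T \<subseteq> {0..<int p ^ L}"
    proof
      fix X assume "X \<in> val ` T"
      then obtain t where t: "t \<in> T" "X = val t" by blast
      have v0: "val t \<ge> 0" unfolding val_def by (intro sum_nonneg) simp
      have tb: "t i < p" if "i < L" for i
      proof -
        have "t i \<in> {0..<p}" using PiE_mem[OF t(1)[unfolded T_def], of i] that by simp
        thus ?thesis by simp
      qed
      have v1: "val t < int p ^ L" unfolding val_def
      proof (rule val_bound)
        fix i assume "i < L" thus "0 \<le> int (t i) \<and> int (t i) < int p" using tb[of i] by simp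
      qed
      from v0 v1 have "val t \<in> {0..<int p ^ L}" by simp
      thus "X \<in> {0..<int p ^ L}" using t(2) by simp
    qed
    show "{0..<int p ^ L} \<subseteq> val ` T"
    proof
      fix X assume X: "X \<in> {0..<int p ^ L}"
      define t where "t = restrict (\<lambda>i. nat ((X div int p ^ i) mod int p)) {..<L}"
      have tT: "t \<in> T" unfolding t_def T_def using p by (auto simp: nat_less_iff)
      have "val t = (\<Sum>i<L. ((X div int p ^ i) mod int p) * int p ^ i)"
        unfolding val_def t_def using p by (intro sum.cong refl) simp
      also have "\<dots> = X mod int p ^ L"
        using digits_sum[of "int p" "\<lambda>_. X" L] p by simp
      also have "\<dots> = X" using X by simp
      finally show "X \<in> val ` T" using tT by (metis image_eqI)
    qed
  qed
  have "card T = p ^ L" unfolding T_def by (simp add: card_PiE)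
  moreover have "card {0..<int p ^ L} = p ^ L" by (simp add: nat_power_eq)
  ultimately have "card (val ` T) = card T" using img by simp
  hence "inj_on val T" by (rule eq_card_imp_inj_on[OF fin])
  thus ?thesis using img unfolding bij_betw_def T_def val_def by simp
qed

lemma haar_integral:
  fixes G :: "int \<Rightarrow> complex"
  assumes p: "prime p"
  shows "has_bochner_integral (padic_haar_Zp p)
           (\<lambda>x. G (\<Sum>t<L. int (x (int t)) * int p ^ t))
           ((1 / real p ^ L) *\<^sub>R (\<Sum>X\<in>{0..<int p ^ L}. G X))"
proof -
  have p0: "p > 0" using p prime_gt_0_nat by blast
  define Mi where "Mi j = uniform_count_measure (if j < 0 then {0::nat} else {0..<p})" for j :: int
  have haar: "padic_haar_Zp p = PiM UNIV Mi" unfolding padic_haar_Zp_def Mi_def ..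
  have prob: "prob_space (Mi j)" for j
    unfolding Mi_def using p0 by (intro prob_space_uniform_count_measure) auto
  have spMi: "space (Mi j) = (if j < 0 then {0::nat} else {0..<p})" for j
    unfolding Mi_def by (simp add: space_uniform_count_measure)
  have setsMi: "sets (Mi j) = Pow (if j < 0 then {0::nat} else {0..<p})" for j
    unfolding Mi_def by (simp add: sets_uniform_count_measure)
  interpret PP: product_prob_space Mi UNIV using prob by (rule product_prob_spaceI)
  define T where "T = PiE {..<L} (\<lambda>_. {0..<p::nat})"
  define val where "val t = (\<Sum>i<L. int (t i) * int p ^ i)" for t :: "nat \<Rightarrow> nat"
  define J where "J = int ` {..<L}"
  define C where "C t = prod_emb UNIV Mi J (PiE J (\<lambda>j. {t (nat j)}))" for t :: "nat \<Rightarrow> nat"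
  have finT: "finite T" unfolding T_def by (simp add: finite_PiE)
  have finJ: "finite J" unfolding J_def by simp
  have cardJ: "card J = L" unfolding J_def by (simp add: card_image)
  have Csets: "{t (nat j)} \<in> sets (Mi j)" if tT: "t \<in> T" and jJ: "j \<in> J" for t j
  proof -
    obtain i where i: "j = int i" "i \<in> {..<L}" using jJ unfolding J_def by (rule imageE)
    have "t i \<in> {0..<p}" using PiE_mem[OF tT[unfolded T_def] i(2)] .
    thus ?thesis unfolding setsMi using i by simp
  qed
  have Cin: "C t \<in> sets (PiM UNIV Mi)" if "t \<in> T" for t
    unfolding C_def using finJ Csets[OF that] by (intro sets_PiM_I) auto
  have Cmeas: "measure (PiM UNIV Mi) (C t) = (1 / real p) ^ L" if "t \<in> T" for t
  proof -
    have "measure (PiM UNIV Mi) (C t) = (\<Prod>j\<in>J. measure (Mi j) {t (nat j)})"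
      unfolding C_def using finJ Csets[OF that] by (intro PP.measure_PiM_emb) auto
    also have "\<dots> = (\<Prod>j\<in>J. 1 / real p)"
    proof (intro prod.cong refl)
      fix j assume j: "j \<in> J"
      have sub: "{t (nat j)} \<subseteq> (if j < 0 then {0::nat} else {0..<p})"
        using Csets[OF that j] setsMi by auto
      have "j \<ge> 0" using j unfolding J_def by auto
      thus "measure (Mi j) {t (nat j)} = 1 / real p"
        unfolding Mi_def using measure_uniform_count_measure[OF _ sub] by simp
    qed
    also have "\<dots> = (1 / real p) ^ L" using cardJ by simp
    finally show ?thesis .
  qed
  have Cfin: "emeasure (PiM UNIV Mi) (C t) < \<infinity>" for t
  proof -
    have PS: "prob_space (PiM UNIV Mi)" using prob by (intro prob_space_PiM) auto
    have e1: "emeasure (PiM UNIV Mi) (space (PiM UNIV Mi)) = 1" using PS by (rule prob_space.emeasure_space_1)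
    have "emeasure (PiM UNIV Mi) (C t) \<le> emeasure (PiM UNIV Mi) (space (PiM UNIV Mi))"
      by (rule emeasure_space)
    hence "emeasure (PiM UNIV Mi) (C t) \<le> 1" unfolding e1 .
    thus ?thesis by (rule le_less_trans) simp
  qed
  have int1: "has_bochner_integral (PiM UNIV Mi) (\<lambda>x. \<Sum>t\<in>T. indicator (C t) x *\<^sub>R G (val t))
                 (\<Sum>t\<in>T. measure (PiM UNIV Mi) (C t) *\<^sub>R G (val t))"
    by (intro has_bochner_integral_sum has_bochner_integral_indicator Cin Cfin)
  have eqf: "G (\<Sum>t<L. int (x (int t)) * int p ^ t) = (\<Sum>t\<in>T. indicator (C t) x *\<^sub>R G (val t))"
    if x: "x \<in> space (PiM UNIV Mi)" for x
  proof -
    define t0 where "t0 = restrict (\<lambda>i. x (int i)) {..<L}"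
    have xs: "x j \<in> space (Mi j)" for j using x by (simp add: space_PiM PiE_iff)
    have t0T: "t0 \<in> T" unfolding t0_def T_def restrict_PiE_iff
    proof (intro ballI)
      fix i assume "i \<in> {..<L}"
      have "x (int i) \<in> space (Mi (int i))" by (rule xs)
      thus "x (int i) \<in> {0..<p}" unfolding spMi by simp
    qed
    have ind: "indicator (C t) x = (if t = t0 then 1 else (0::real))" if tT: "t \<in> T" for t
    proof -
      have "x \<in> C t \<longleftrightarrow> restrict x J \<in> PiE J (\<lambda>j. {t (nat j)})"
        unfolding C_def prod_emb_iff using xs by simp
      also have "\<dots> \<longleftrightarrow> (\<forall>j\<in>J. x j \<in> {t (nat j)})" by (rule restrict_PiE_iff)
      also have "\<dots> \<longleftrightarrow> (\<forall>i<L. x (int i) = t i)" unfolding J_def by auto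
      also have "\<dots> \<longleftrightarrow> t = t0"
      proof
        assume h: "\<forall>i<L. x (int i) = t i"
        show "t = t0"
        proof
          fix i show "t i = t0 i"
          proof (cases "i < L")
            case True thus ?thesis using h unfolding t0_def by simp
          next
            case False
            hence "t i = undefined" using PiE_arb[OF tT[unfolded T_def], of i] by simp
            moreover have "t0 i = undefined" using False unfolding t0_def by simp
            ultimately show ?thesis by simp
          qed
        qed
      next
        assume "t = t0" thus "\<forall>i<L. x (int i) = t i" unfolding t0_def by simp
      qed
      finally show ?thesis by (simp add: indicator_def)
    qed
    have "(\<Sum>t\<in>T. indicator (C t) x *\<^sub>R G (val t)) = (\<Sum>t\<in>T. if t = t0 then G (val t) else 0)"
      by (intro sum.cong refl) (simp add: ind)
    also have "\<dots> = G (val t0)" using finT t0T by (simp add: sum.delta)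
    also have "val t0 = (\<Sum>t<L. int (x (int t)) * int p ^ t)" unfolding val_def t0_def by simp
    finally show ?thesis by simp
  qed
  have "(\<Sum>t\<in>T. measure (PiM UNIV Mi) (C t) *\<^sub>R G (val t)) = (\<Sum>t\<in>T. (1 / real p) ^ L *\<^sub>R G (val t))"
    by (intro sum.cong refl) (simp add: Cmeas)
  also have "\<dots> = (1 / real p) ^ L *\<^sub>R (\<Sum>t\<in>T. G (val t))" by (simp add: scaleR_sum_right)
  also have "(\<Sum>t\<in>T. G (val t)) = (\<Sum>X\<in>{0..<int p ^ L}. G X)"
    using val_bij[OF p0, of L] unfolding T_def val_def by (rule sum.reindex_bij_betw)
  finally have val: "(\<Sum>t\<in>T. measure (PiM UNIV Mi) (C t) *\<^sub>R G (val t)) = (1 / real p ^ L) *\<^sub>R (\<Sum>X\<in>{0..<int p ^ L}. G X)"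
    by (simp add: power_one_over)
  show ?thesis unfolding haar
    using int1 eqf val by (subst has_bochner_integral_cong[OF refl, where g="\<lambda>x. \<Sum>t\<in>T. indicator (C t) x *\<^sub>R G (val t)"]) auto
qed


theorem mainTheorem6:
  fixes p n :: nat and a :: "nat \<Rightarrow> padic"
  assumes "prime p" and "n \<ge> 1"
    and "\<And>j. j \<in> {1..n} \<Longrightarrow> padic_num p (a j)"
    and "padic_abs p (a 1) > real p"
    and "\<And>j. j \<in> {2..n} \<Longrightarrow>
           padic_abs p (a 1) > padic_abs p (padic_mul p (padic_of_int p (int j)) (a j))"
  shows "has_bochner_integral (padic_haar_Zp p) (\<lambda>x. padic_chi p (padic_poly p a n x)) 0"
proof -
  note p = assms(1)
  have p0: "p > 0" using p prime_gt_0_nat by blast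
  have p2: "p \<ge> 2" using prime_ge_2_nat[OF p] .
  have pi: "prime (int p)" using p by (simp add: prime_nat_int_transfer)
  have anum: "padic_num p (a j)" if "j \<in> {1..n}" for j using assms(3) that .
  have a1num: "padic_num p (a 1)" using anum assms(2) by simp
  have a1nz: "a 1 \<noteq> (\<lambda>_. 0)"
  proof
    assume "a 1 = (\<lambda>_. 0)"
    hence "padic_abs p (a 1) = 0" unfolding padic_abs_def by simp
    thus False using assms(4) by simp
  qed
  obtain k1 where k1: "a 1 k1 \<noteq> 0" "\<forall>j<k1. a 1 j = 0" using lead_ex[OF a1num a1nz] by blast
  have abs1: "padic_abs p (a 1) = real p powi (- k1)" using abs_eq[OF k1] .
  have k1b: "- k1 \<ge> 2"
  proof (rule ccontr)
    assume "\<not> - k1 \<ge> 2"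
    hence "- k1 \<le> 1" by simp
    moreover have "1 \<le> real p" using p0 by simp
    ultimately have "real p powi (- k1) \<le> real p powi 1" by (rule power_int_increasing)
    thus False using assms(4) abs1 by simp
  qed
  define m where "m = nat (- k1)"
  have m2: "m \<ge> 2" and k1m: "k1 = - int m" using k1b unfolding m_def by auto
  have "\<forall>j\<in>{1..n}. \<exists>k. \<forall>t<k. a j t = 0" using anum unfolding padic_num_def by blast
  then obtain kf where kf: "\<And>j t. j \<in> {1..n} \<Longrightarrow> t < kf j \<Longrightarrow> a j t = 0" by metis
  define L where "L = max m (Max ((\<lambda>j. nat (- kf j)) ` {1..n}))"
  have Lm: "m \<le> L" unfolding L_def by simp
  have low: "a j t = 0" if j: "j \<in> {1..n}" and t: "t < - int L" for j t
  proof -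
    have "nat (- kf j) \<le> Max ((\<lambda>j. nat (- kf j)) ` {1..n})" using j by (intro Max_ge) auto
    hence "nat (- kf j) \<le> L" unfolding L_def by simp
    hence "t < kf j" using t by linarith
    thus ?thesis using kf j by blast
  qed
  define w where "w = L - m"
  have Lw: "L = w + m" using Lm unfolding w_def by simp
  define Aint where "Aint j i = V p (a j) L (i + L)" for j i
  have truncA: "padic_trunc p (a j) N = of_int (Aint j (nat N)) / of_nat p ^ L"
    if j: "j \<in> {1..n}" and N: "N \<ge> 0" for j N
  proof -
    have "padic_trunc p (a j) N = of_int (V p (a j) L (nat (N + int L))) / of_nat p ^ L"
      using N by (intro trunc_V[OF p0]) (auto intro: low[OF j])
    also have "nat (N + int L) = nat N + L" using N by simp
    finally show ?thesis unfolding Aint_def .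
  qed
  have Acong: "int p ^ i dvd Aint j i' - Aint j i" if "i \<le> i'" for j i i'
  proof -
    have "int p ^ (i + L) dvd Aint j i' - Aint j i" unfolding Aint_def using that by (intro V_cong) simp
    moreover have "int p ^ i dvd int p ^ (i + L)" by (simp add: le_imp_power_dvd)
    ultimately show ?thesis by (metis dvd_trans)
  qed
  obtain u where A1: "Aint 1 L = int p ^ w * u" and u: "\<not> int p dvd u"
  proof -
    define e where "e t = int (a 1 (int t - int L))" for t
    have "Aint 1 L = (\<Sum>t<L + L. e t * int p ^ t)" unfolding Aint_def V_def e_def by simp
    moreover have "\<And>t. t < w \<Longrightarrow> e t = 0" unfolding e_def using k1(2) k1m Lw by auto
    moreover have "w < L + L" using Lw m2 by simp
    ultimately obtain r where r: "Aint 1 L = int p ^ w * (e w + int p * r)"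
      using sum_lead[of w e "L + L" "int p"] by metis
    have ew: "e w = int (a 1 k1)" unfolding e_def using k1m Lw by simp
    have "0 < e w" "e w < int p" using ew k1(1) anum[of 1] assms(2) unfolding padic_num_def by auto
    have "\<not> int p dvd (e w + int p * r)"
    proof
      assume "int p dvd (e w + int p * r)"
      hence "int p dvd e w" by (simp add: dvd_add_left_iff)
      hence "int p \<le> e w" using \<open>0 < e w\<close> by (simp add: zdvd_imp_le)
      thus False using \<open>e w < int p\<close> by simp
    qed
    thus ?thesis using that r by blast
  qed
  have Aj: "int p ^ (w+1) dvd int j * Aint j L" if j: "j \<in> {2..n}" for j
  proof -
    have j1: "j \<in> {1..n}" using j by simp
    define oj where "oj = mkz p (\<lambda>_. int j) 0"
    have ojdef: "padic_of_int p (int j) = oj"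
      unfolding padic_of_int_def oj_def by (rule limit_mkz[OF p]) simp_all
    have trunc_oj: "padic_trunc p oj N = of_int (int j mod int p ^ nat N)" if N: "N \<ge> 0" for N
    proof -
      have "padic_trunc p oj N = of_int (V p oj 0 (nat (N + int 0))) / of_nat p ^ 0"
        unfolding oj_def using N by (intro trunc_V[OF p0] mkz_low) auto
      also have "V p oj 0 (nat (N + int 0)) = int j mod int p ^ nat N"
        unfolding oj_def by (subst V_mkz[OF p0]) simp_all
      finally show ?thesis by simp
    qed
    define S' where "S' i = (int j mod int p ^ i) * Aint j i" for i
    have cong': "int p ^ i dvd S' i' - S' i" if "i \<le> i'" for i i'
    proof -
      have "(int j mod int p ^ i') mod int p ^ i = int j mod int p ^ i"
        using that by (simp add: mod_mod_cancel le_imp_power_dvd)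
      hence "(int j mod int p ^ i') mod int p ^ i = (int j mod int p ^ i) mod int p ^ i" by simp
      hence "int p ^ i dvd (int j mod int p ^ i') - (int j mod int p ^ i)"
        by (simp only: mod_eq_dvd_iff)
      thus ?thesis unfolding S'_def using Acong[OF that] by (rule dvd_diff_mult)
    qed
    define z' where "z' = mkz p S' L"
    have muleq: "padic_mul p (padic_of_int p (int j)) (a j) = z'"
      unfolding ojdef padic_mul_def z'_def
    proof (rule limit_mkz[OF p cong'])
      fix N :: int assume N: "N \<ge> 0"
      show "padic_trunc p oj N * padic_trunc p (a j) N = of_int (S' (nat N)) / of_nat p ^ L"
        using trunc_oj[OF N] truncA[OF j1 N] unfolding S'_def by simp
    qed
    have zlow: "z' t = 0" if t: "t < - int m + 1" for t
    proof (cases "z' = (\<lambda>_. 0)")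
      case True thus ?thesis by simp
    next
      case False
      have znum: "padic_num p z'" unfolding z'_def using p0 by (rule mkz_num)
      obtain k' where k': "z' k' \<noteq> 0" "\<forall>j<k'. z' j = 0" using lead_ex[OF znum False] by blast
      have "real p powi (- k') < real p powi (int m)"
        using assms(5)[OF j] unfolding muleq abs1 abs_eq[OF k'] k1m by simp
      hence "- k' < int m"
      proof (rule contrapos_pp)
        assume "\<not> - k' < int m"
        hence "int m \<le> - k'" by simp
        moreover have "1 \<le> real p" using p0 by simp
        ultimately have "real p powi (int m) \<le> real p powi (- k')" by (rule power_int_increasing)
        thus "\<not> real p powi (- k') < real p powi (int m)" by simp
      qed
      hence "t < k'" using t by simp
      thus ?thesis using k' by simp
    qed
    have "V p z' L (w+1) = 0" unfolding V_def
    proof (rule sum.neutral, rule ballI)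
      fix t assume "t \<in> {..<w+1}"
      hence "int t - int L < - int m + 1" using Lw by auto
      thus "int (z' (int t - int L)) * int p ^ t = 0" using zlow by simp
    qed
    hence "S' (w+1) mod int p ^ (w+1) = 0" unfolding z'_def using V_mkz[OF p0 cong'] by simp
    hence d1: "int p ^ (w+1) dvd S' (w+1)" by (simp add: dvd_eq_mod_eq_0)
    have "w + 1 \<le> L" using Lw m2 by simp
    hence "int p ^ (w+1) dvd S' L - S' (w+1)" by (rule cong')
    hence d2: "int p ^ (w+1) dvd S' L" using d1 by (metis dvd_diff_commute dvd_add_right_iff diff_add_cancel)
    have "int p ^ L dvd int j - int j mod int p ^ L"
      using minus_mod_eq_mult_div[of "int j" "int p ^ L"] by simp
    moreover have "int p ^ (w+1) dvd int p ^ L" using \<open>w + 1 \<le> L\<close> by (rule le_imp_power_dvd)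
    ultimately have "int p ^ (w+1) dvd (int j - int j mod int p ^ L) * Aint j L"
      by (meson dvd_trans dvd_mult2)
    moreover have "int j * Aint j L = (int j - int j mod int p ^ L) * Aint j L + S' L"
      unfolding S'_def by (simp add: algebra_simps)
    ultimately show ?thesis using d2 by simp
  qed
  define Xv where "Xv x = (\<Sum>t<L. int (x (int t)) * int p ^ t)" for x :: padic
  define P where "P X = (\<Sum>j=1..n. Aint j L * X ^ j)" for X
  have integrand: "padic_chi p (padic_poly p a n x) = ee (of_int (P (Xv x)) / real p ^ L)"
    if x: "x \<in> space (padic_haar_Zp p)" for x
  proof -
    have xs: "x j \<in> (if j < 0 then {0} else {0..<p})" for j
      using x unfolding padic_haar_Zp_def by (simp add: space_PiM PiE_iff space_uniform_count_measure)
    have xlow: "x j = 0" if "j < - int 0" for j using xs[of j] that by simp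
    have xnum: "padic_num p x" unfolding padic_num_def
    proof
      show "\<forall>j. x j < p"
      proof
        fix j show "x j < p" using xs[of j] p0 by (cases "j < 0") auto
      qed
      show "\<exists>k. \<forall>j<k. x j = 0" using xlow by (intro exI[of _ 0]) simp
    qed
    define Xi where "Xi i = V p x 0 i" for i
    have truncx: "padic_trunc p x N = of_int (Xi (nat N))" if N: "N \<ge> 0" for N
    proof -
      have "padic_trunc p x N = of_int (V p x 0 (nat (N + int 0))) / of_nat p ^ 0"
        using N by (intro trunc_V[OF p0] xlow) auto
      thus ?thesis unfolding Xi_def by simp
    qed
    define S'' where "S'' i = (\<Sum>j=1..n. Aint j i * Xi i ^ j)" for i
    have cong'': "int p ^ i dvd S'' i' - S'' i" if "i \<le> i'" for i i'
      unfolding S''_def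
    proof (rule dvd_diff_sum)
      fix j assume "j \<in> {1..n}"
      have "int p ^ i dvd Xi i' - Xi i" unfolding Xi_def using that by (rule V_cong)
      hence "int p ^ i dvd Xi i' ^ j - Xi i ^ j" by (rule dvd_diff_pow)
      thus "int p ^ i dvd Aint j i' * Xi i' ^ j - Aint j i * Xi i ^ j"
        using Acong[OF that] by (intro dvd_diff_mult)
    qed
    have polyeq: "padic_poly p a n x = mkz p S'' L"
      unfolding padic_poly_def
    proof (rule limit_mkz[OF p cong''])
      fix N :: int assume N: "N \<ge> 0"
      have "(\<Sum>j=1..n. padic_trunc p (a j) N * padic_trunc p x N ^ j)
          = (\<Sum>j=1..n. of_int (Aint j (nat N) * Xi (nat N) ^ j) / (of_nat p ^ L :: rat))"
        by (intro sum.cong refl) (simp add: truncA N truncx)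
      also have "\<dots> = of_int (S'' (nat N)) / of_nat p ^ L"
        unfolding S''_def by (simp add: sum_divide_distrib)
      finally show "(\<Sum>j=1..n. padic_trunc p (a j) N * padic_trunc p x N ^ j) = of_int (S'' (nat N)) / of_nat p ^ L" .
    qed
    have "padic_chi p (padic_poly p a n x) = ee (of_int (V p (mkz p S'' L) L L) / real p ^ L)"
      unfolding polyeq by (intro chi_V[OF p] mkz_num p0 mkz_low)
    also have "V p (mkz p S'' L) L L = S'' L mod int p ^ L" by (rule V_mkz[OF p0 cong''])
    also have "ee (of_int (S'' L mod int p ^ L) / real p ^ L) = ee (of_int (S'' L) / real p ^ L)"
      using p0 by (intro ee_cong) (simp add: mod_eq_dvd_iff[symmetric])
    also have "S'' L = P (Xv x)" unfolding S''_def P_def Xi_def Xv_def V_def by simp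
    finally show ?thesis .
  qed
  have Aj': "\<And>j. j \<in> {2..n} \<Longrightarrow> int p ^ (w+1) dvd int j * Aint j L" using Aj by blast
  have NL: "L \<ge> w + m" using Lw by simp
  have "(\<Sum>X\<in>{0..<int p ^ L}. ee (of_int (\<Sum>j=1..n. Aint j L * X ^ j) / real p ^ (w+m))) = 0"
    apply (rule expsum[OF p m2 NL, of "\<lambda>j. Aint j L" u n])
    apply (insert A1 u Aj' assms(2))
    by auto
  hence sum0: "(\<Sum>X\<in>{0..<int p ^ L}. ee (of_int (P X) / real p ^ L)) = 0"
    unfolding P_def Lw[symmetric] .
  have "has_bochner_integral (padic_haar_Zp p) (\<lambda>x. ee (of_int (P (Xv x)) / real p ^ L))
          ((1 / real p ^ L) *\<^sub>R (\<Sum>X\<in>{0..<int p ^ L}. ee (of_int (P X) / real p ^ L)))"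
    unfolding Xv_def by (rule haar_integral[OF p])
  hence "has_bochner_integral (padic_haar_Zp p) (\<lambda>x. ee (of_int (P (Xv x)) / real p ^ L)) 0"
    unfolding sum0 by simp
  thus ?thesis
    by (subst has_bochner_integral_cong[OF refl _ refl]) (auto simp: integrand)
qed


end
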